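(* There is a continuous function $f:2^{\omega}\to 2^{\omega}$ such that $f^{-1}[\{x\}]\notin I_0$ for every $x\in 2^{\omega}$. Consequently the $\sigma$-ideal $I_0$ has property (M) and does not have property (D).
   Context: $2^\omega$ is the Cantor group with coordinatewise addition modulo 2, written $\oplus$ or $+$. $I_0$ is the $\sigma$-ideal on $2^\omega$ generated by the family of all Borel sets $B\subseteq 2^\omega$ for which there is a nonempty perfect set $P\subseteq 2^\omega$ such that the sets $B\oplus x$ ($x\in P$) are pairwise disjoint; $I_0$ is translation invariant and proper. Property (M) for an ideal $I$ on a Polish space $X$: there is a Borel function $f:X\to X$ with $f^{-1}[\{x\}]\notin I$ for every $x\in X$. Property (D) for a translation-invariant ideal $I$ on a Polish abelian group $X$: there are a Borel set $B\notin I$ and a nonempty perfect set $P\subseteq X$ such that $(B+x)\cap(B+y)=\emptyset$ for all distinct $x,y\in P$. *)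

theory Defs
  imports "HOL-Analysis.Analysis"
begin

type_synonym cantor = "nat \<Rightarrow> bool"

definition cadd :: "cantor \<Rightarrow> cantor \<Rightarrow> cantor" (infixl "\<oplus>\<^sub>c" 65) where
  "x \<oplus>\<^sub>c y = (\<lambda>n. x n \<noteq> y n)"

definition ctrans :: "cantor set \<Rightarrow> cantor \<Rightarrow> cantor set" where
  "ctrans B x = (\<lambda>b. b \<oplus>\<^sub>c x) ` B"

definition nonempty_perfect :: "'a::topological_space set \<Rightarrow> bool" where
  "nonempty_perfect P \<longleftrightarrow> P \<noteq> {} \<and> closed P \<and> (\<forall>x\<in>P. x islimpt P)"

definition I0_gen :: "cantor set set" where
  "I0_gen = {B \<in> sets borel. \<exists>P. nonempty_perfect P \<and>
      (\<forall>x\<in>P. \<forall>y\<in>P. x \<noteq> y \<longrightarrow> ctrans B x \<inter> ctrans B y = {})}"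

definition I0 :: "cantor set set" where
  "I0 = {A. \<exists>C :: nat \<Rightarrow> cantor set. (\<forall>n. C n \<in> I0_gen) \<and> A \<subseteq> (\<Union>n. C n)}"

definition propM :: "'a::topological_space set set \<Rightarrow> bool" where
  "propM I \<longleftrightarrow> (\<exists>f :: 'a \<Rightarrow> 'a. f \<in> borel \<rightarrow>\<^sub>M borel \<and> (\<forall>x. f -` {x} \<notin> I))"

definition propD :: "cantor set set \<Rightarrow> bool" where
  "propD I \<longleftrightarrow> (\<exists>B \<in> sets borel. B \<notin> I \<and> (\<exists>P. nonempty_perfect P \<and>
      (\<forall>x\<in>P. \<forall>y\<in>P. x \<noteq> y \<longrightarrow> ctrans B x \<inter> ctrans B y = {})))"

end

theory Submission
  imports Defs
begin


lemma cs: "compact_space (euclidean :: cantor topology)"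
proof -
  have "compact_space (euclidean :: bool topology)"
    by (simp add: compact_space_def finite_imp_compact)
  then show ?thesis
    by (metis euclidean_product_topology compact_space_product_topology)
qed

lemma hs: "Hausdorff_space (euclidean :: cantor topology)"
proof -
  have "Hausdorff_space (euclidean :: bool topology)"
    unfolding Hausdorff_space_def
  proof (intro allI impI)
    fix x y :: bool assume "x \<in> topspace euclidean \<and> y \<in> topspace euclidean \<and> x \<noteq> y"
    then have "x \<noteq> y" by blast
    then show "\<exists>U V. openin euclidean U \<and> openin euclidean V \<and> x \<in> U \<and> y \<in> V \<and> disjnt U V"
      by (intro exI[of _ "{x}"] exI[of _ "{y}"]) (auto simp: open_discrete disjnt_def)
  qed
  then show ?thesis
    by (metis euclidean_product_topology Hausdorff_space_product_topology)
qed

lemma baire: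
  fixes G :: "cantor set set"
  assumes "countable G" "\<And>T. T \<in> G \<Longrightarrow> closed T \<and> interior T = {}"
  shows "interior (\<Union>G) = {}"
proof -
  have lc: "locally_compact_space (euclidean::cantor topology)"
    by (rule compact_imp_locally_compact_space[OF cs])
  have rs: "regular_space (euclidean::cantor topology)"
    by (rule compact_Hausdorff_imp_regular_space[OF cs hs])
  have "euclidean interior_of \<Union>G = {}"
  proof (rule Baire_category_alt)
    show "completely_metrizable_space (euclidean::cantor topology) \<or> locally_compact_space (euclidean::cantor topology) \<and> regular_space (euclidean::cantor topology)"
      using lc rs by blast
    show "countable G" by fact
    fix T assume "T \<in> G"
    then show "closedin euclidean T \<and> euclidean interior_of T = {}"
      using assms(2) by (simp add: closed_closedin[symmetric])
  qed
  then show ?thesis by simp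
qed

definition cyl :: "cantor \<Rightarrow> nat \<Rightarrow> cantor set" where
  "cyl x N = {y. \<forall>i<N. y i = x i}"

lemma cyl_self: "x \<in> cyl x N"
  by (simp add: cyl_def)

lemma open_fin_cyl:
  assumes "finite D"
  shows "open {y::cantor. \<forall>i\<in>D. y i = x i}"
proof -
  have "open {f::cantor. \<forall>i\<in>D. f (id i) \<in> {x i}}"
    by (rule product_topology_basis') (auto simp: assms open_discrete)
  then show ?thesis by simp
qed

lemma open_cyl: "open (cyl x N)"
proof -
  have "cyl x N = {y::cantor. \<forall>i\<in>{..<N}. y i = x i}" by (auto simp: cyl_def)
  then show ?thesis using open_fin_cyl[of "{..<N}" x] by simp
qed

lemma open_cyl_sub:
  assumes "open U" "x \<in> U"
  shows "\<exists>N. cyl x N \<subseteq> U"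
proof -
  from assms obtain V where V: "finite {i. V i \<noteq> UNIV}" "x \<in> Pi\<^sub>E UNIV V" "Pi\<^sub>E UNIV V \<subseteq> U"
    unfolding open_fun_def openin_product_topology_alt by auto
  obtain N where N: "\<And>i. i \<in> {i. V i \<noteq> UNIV} \<Longrightarrow> i < N"
    using V(1) finite_nat_bounded by (metis lessThan_iff subset_eq)
  have "cyl x N \<subseteq> Pi\<^sub>E UNIV V"
  proof
    fix y assume y: "y \<in> cyl x N"
    have "y i \<in> V i" for i
    proof (cases "V i = UNIV")
      case False
      then have "i < N" using N by blast
      then have "y i = x i" using y by (simp add: cyl_def)
      then show ?thesis using V(2) by (auto simp: PiE_iff)
    qed simp
    then show "y \<in> Pi\<^sub>E UNIV V" by (auto simp: PiE_iff)
  qed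
  then show ?thesis using V(3) by blast
qed

lemma cont_fin_dep:
  fixes g :: "cantor \<Rightarrow> bool"
  assumes "finite D" "\<And>x y. (\<forall>i\<in>D. x i = y i) \<Longrightarrow> g x = g y"
  shows "continuous_on UNIV g"
proof -
  have "open (g -` B)" for B
  proof -
    have "g -` B = (\<Union>x\<in>g -` B. {y. \<forall>i\<in>D. y i = x i})"
    proof
      show "g -` B \<subseteq> (\<Union>x\<in>g -` B. {y. \<forall>i\<in>D. y i = x i})" by auto
      show "(\<Union>x\<in>g -` B. {y. \<forall>i\<in>D. y i = x i}) \<subseteq> g -` B"
      proof
        fix y assume "y \<in> (\<Union>x\<in>g -` B. {y. \<forall>i\<in>D. y i = x i})"
        then obtain x where "x \<in> g -` B" "\<forall>i\<in>D. y i = x i" by blast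
        then show "y \<in> g -` B" using assms(2)[of y x] by simp
      qed
    qed
    moreover have "open (\<Union>x\<in>g -` B. {y. \<forall>i\<in>D. y i = x i})"
      by (intro open_UN ballI open_fin_cyl[OF assms(1)])
    ultimately show ?thesis by simp
  qed
  then show ?thesis by (simp add: continuous_on_open_vimage)
qed

lemma cont_cantor:
  fixes g :: "cantor \<Rightarrow> cantor"
  assumes "\<And>y. \<exists>D. finite D \<and> (\<forall>x x'. (\<forall>i\<in>D. x i = x' i) \<longrightarrow> g x y = g x' y)"
  shows "continuous_on UNIV g"
proof (rule continuous_on_coordinatewise_then_product)
  fix y
  from assms obtain D where "finite D" "\<forall>x x'. (\<forall>i\<in>D. x i = x' i) \<longrightarrow> g x y = g x' y" by blast
  then show "continuous_on UNIV (\<lambda>x. g x y)" by (intro cont_fin_dep[of D]) auto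
qed



definition meagr :: "cantor set \<Rightarrow> bool" where
  "meagr A \<longleftrightarrow> (\<exists>K::nat \<Rightarrow> cantor set. (\<forall>n. closed (K n) \<and> interior (K n) = {}) \<and> A \<subseteq> (\<Union>n. K n))"

lemma meagr_subset: "meagr B \<Longrightarrow> A \<subseteq> B \<Longrightarrow> meagr A"
  unfolding meagr_def by blast

lemma meagr_empty: "meagr {}"
  unfolding meagr_def by (rule exI[of _ "\<lambda>n. {}"]) simp

lemma meagr_UN:
  assumes "\<And>n::nat. meagr (A n)"
  shows "meagr (\<Union>n. A n)"
proof -
  have "\<forall>n. \<exists>K::nat \<Rightarrow> cantor set. (\<forall>m. closed (K m) \<and> interior (K m) = {}) \<and> A n \<subseteq> (\<Union>m. K m)"
    using assms unfolding meagr_def by blast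
  then have ex: "\<exists>K::nat \<Rightarrow> cantor set. (\<forall>m. closed (K m) \<and> interior (K m) = {}) \<and> A n \<subseteq> (\<Union>m. K m)" for n
    by blast
  define K where "K n = (SOME K::nat \<Rightarrow> cantor set. (\<forall>m. closed (K m) \<and> interior (K m) = {}) \<and> A n \<subseteq> (\<Union>m. K m))" for n
  have K0: "(\<forall>m. closed (K n m) \<and> interior (K n m) = {}) \<and> A n \<subseteq> (\<Union>m. K n m)" for n
    unfolding K_def by (rule someI_ex[OF ex])
  then have K: "\<And>n m. closed (K n m)" "\<And>n m. interior (K n m) = {}" "\<And>n. A n \<subseteq> (\<Union>m. K n m)"
    by auto
  define K' where "K' k = K (fst (prod_decode k)) (snd (prod_decode k))" for k
  have "(\<Union>n. A n) \<subseteq> (\<Union>k. K' k)"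
  proof
    fix x assume "x \<in> (\<Union>n. A n)"
    then obtain n m where "x \<in> K n m" using K(3) by blast
    then have "x \<in> K' (prod_encode (n, m))" by (simp add: K'_def)
    then show "x \<in> (\<Union>k. K' k)" by blast
  qed
  moreover have "\<forall>k. closed (K' k) \<and> interior (K' k) = {}" using K by (simp add: K'_def)
  ultimately show ?thesis unfolding meagr_def by blast
qed

lemma meagr_Un:
  assumes "meagr A" "meagr B"
  shows "meagr (A \<union> B)"
proof -
  have "meagr (\<Union>n::nat. if n = 0 then A else B)"
    by (rule meagr_UN[of "\<lambda>n. if n = 0 then A else B"]) (simp add: assms)
  moreover have "(\<Union>n::nat. if n = 0 then A else B) = A \<union> B"
    by (auto split: if_splits)
  ultimately show ?thesis by simp
qed

lemma nwd_meagr: "closed K \<Longrightarrow> interior K = {} \<Longrightarrow> meagr K"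
  unfolding meagr_def by (rule exI[of _ "\<lambda>n. K"]) simp

lemma open_not_meagr:
  assumes "open U" "U \<noteq> {}"
  shows "\<not> meagr U"
proof
  assume "meagr U"
  then obtain K :: "nat \<Rightarrow> cantor set" where K: "\<And>n. closed (K n)" "\<And>n. interior (K n) = {}" "U \<subseteq> (\<Union>n. K n)"
    unfolding meagr_def by blast
  have "interior (\<Union>(range K)) = {}"
    by (rule baire) (auto simp: K)
  moreover have "U \<subseteq> interior (\<Union>(range K))"
    using K(3) assms(1) by (simp add: interior_maximal)
  ultimately show False using assms(2) by blast
qed

definition hasBP :: "cantor set \<Rightarrow> bool" where
  "hasBP A \<longleftrightarrow> (\<exists>U. open U \<and> meagr ((A - U) \<union> (U - A)))"

lemma borel_BP:
  assumes "A \<in> sets borel"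
  shows "hasBP A"
proof -
  have "A \<in> sigma_sets UNIV {S. open S}" using assms by (simp add: sets_borel)
  then show ?thesis
  proof (induction rule: sigma_sets.induct)
    case (Basic a)
    then show ?case unfolding hasBP_def by (intro exI[of _ a]) (simp add: meagr_empty)
  next
    case Empty
    then show ?case unfolding hasBP_def by (intro exI[of _ "{}"]) (simp add: meagr_empty)
  next
    case (Compl a)
    then obtain U where U: "open U" "meagr ((a - U) \<union> (U - a))" unfolding hasBP_def by blast
    define V where "V = interior (UNIV - U)"
    define K where "K = (UNIV - U) - V"
    have "closed K" unfolding K_def V_def using U(1) by (intro closed_Diff) auto
    moreover have "interior K = {}"
    proof -
      have "interior K \<subseteq> V" unfolding V_def K_def
        by (rule interior_mono) blast
      moreover have "interior K \<subseteq> K" by (rule interior_subset)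
      ultimately show ?thesis unfolding K_def by blast
    qed
    ultimately have mK: "meagr K" by (rule nwd_meagr)
    have VU: "V \<subseteq> UNIV - U" unfolding V_def by (rule interior_subset)
    have sub: "((UNIV - a) - V) \<union> (V - (UNIV - a)) \<subseteq> ((a - U) \<union> (U - a)) \<union> K"
      unfolding K_def using VU by blast
    have "meagr (((a - U) \<union> (U - a)) \<union> K)" using U(2) mK by (rule meagr_Un)
    then have "meagr (((UNIV - a) - V) \<union> (V - (UNIV - a)))" using sub by (rule meagr_subset)
    moreover have "open V" unfolding V_def by simp
    ultimately show ?case unfolding hasBP_def by blast
  next
    case (Union a)
    then have "\<forall>i. \<exists>U. open U \<and> meagr ((a i - U) \<union> (U - a i))" unfolding hasBP_def by blast
    then obtain U where U: "\<And>i. open (U i)" "\<And>i. meagr ((a i - U i) \<union> (U i - a i))" by metis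
    have sub: "((\<Union>i. a i) - (\<Union>i. U i)) \<union> ((\<Union>i. U i) - (\<Union>i. a i)) \<subseteq> (\<Union>i. (a i - U i) \<union> (U i - a i))"
      by blast
    have "meagr (\<Union>i. (a i - U i) \<union> (U i - a i))" by (rule meagr_UN) (rule U(2))
    then have "meagr (((\<Union>i. a i) - (\<Union>i. U i)) \<union> ((\<Union>i. U i) - (\<Union>i. a i)))" using sub by (rule meagr_subset)
    moreover have "open (\<Union>i. U i)" using U(1) by (intro open_UN) auto
    ultimately show ?case unfolding hasBP_def by blast
  qed
qed

definition flip :: "nat \<Rightarrow> cantor \<Rightarrow> cantor" where
  "flip j c = c(j := \<not> c j)"

lemma flip_flip [simp]: "flip j (flip j c) = c"
  by (auto simp: flip_def)

lemma cont_flip: "continuous_on UNIV (flip j)"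
proof (rule cont_cantor)
  fix y
  show "\<exists>D. finite D \<and> (\<forall>x x'. (\<forall>i\<in>D. x i = x' i) \<longrightarrow> flip j x y = flip j x' y)"
    by (rule exI[of _ "{y}"]) (simp add: flip_def)
qed

lemma meagr_flip:
  assumes "meagr A"
  shows "meagr (flip j -` A)"
proof -
  obtain K :: "nat \<Rightarrow> cantor set" where K: "\<And>n. closed (K n)" "\<And>n. interior (K n) = {}" "A \<subseteq> (\<Union>n. K n)"
    using assms unfolding meagr_def by blast
  have cv: "\<forall>B. closed B \<longrightarrow> closed (flip j -` B \<inter> UNIV)"
    using continuous_on_closed_vimage[of UNIV "flip j"] cont_flip[of j] closed_UNIV by blast
  have ov: "\<forall>B. open B \<longrightarrow> open (flip j -` B \<inter> UNIV)"
    using continuous_on_open_vimage[of UNIV "flip j"] cont_flip[of j] open_UNIV by blast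
  have cl: "closed (flip j -` K n)" for n
    using cv K(1)[of n] by (metis Int_UNIV_right)
  have int: "interior (flip j -` K n) = {}" for n
  proof (rule ccontr)
    assume "interior (flip j -` K n) \<noteq> {}"
    then obtain w where w: "w \<in> interior (flip j -` K n)" by blast
    define W where "W = flip j -` interior (flip j -` K n)"
    have "open W" unfolding W_def
      using ov open_interior by (metis Int_UNIV_right)
    moreover have "W \<subseteq> K n"
    proof
      fix y assume "y \<in> W"
      then have "flip j y \<in> interior (flip j -` K n)" unfolding W_def by simp
      then have "flip j y \<in> flip j -` K n" using interior_subset by blast
      then have "flip j (flip j y) \<in> K n" by simp
      then show "y \<in> K n" by (simp only: flip_flip)
    qed
    ultimately have "W \<subseteq> interior (K n)" by (simp add: interior_maximal)
    moreover have "flip j w \<in> W" unfolding W_def using w by simp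
    ultimately show False using K(2) by blast
  qed
  have "flip j -` A \<subseteq> (\<Union>n. flip j -` K n)" using K(3) by blast
  then show ?thesis unfolding meagr_def
    by (intro exI[of _ "\<lambda>n. flip j -` K n"]) (simp add: cl int)
qed

lemma flip_cyl: "N \<le> j \<Longrightarrow> c \<in> cyl x N \<Longrightarrow> flip j c \<in> cyl x N"
  by (auto simp: cyl_def flip_def)

lemma perfect_pair:
  fixes P :: "cantor set"
  assumes "nonempty_perfect P"
  shows "\<exists>p q. p \<in> P \<and> q \<in> P \<and> p \<noteq> q \<and> (\<forall>i<m. p i = q i)"
proof -
  from assms obtain p where p: "p \<in> P" "p islimpt P" unfolding nonempty_perfect_def by blast
  then obtain q where "q \<in> P" "q \<in> cyl p m" "q \<noteq> p"
    using islimptE[OF p(2) cyl_self[of p m] open_cyl[of p m]] by metis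
  then show ?thesis using p(1) by (intro exI[of _ p] exI[of _ q]) (auto simp: cyl_def)
qed



definition cd :: "nat \<Rightarrow> nat \<Rightarrow> nat \<Rightarrow> nat" where
  "cd k s i = prod_encode (k, prod_encode (s, i))"

definition ff :: "cantor \<Rightarrow> cantor" where
  "ff x k = (\<exists>S\<in>Pow {..k}. \<forall>i<k+2. \<not> x (cd k (set_encode S) i))"

definition BC :: "nat \<Rightarrow> nat set" where
  "BC k = (\<lambda>(S,i). cd k (set_encode S) i) ` (Pow {..k} \<times> {..<k+2})"

lemma finite_BC: "finite (BC k)"
  unfolding BC_def by simp

lemma cd_BC: "S \<subseteq> {..k} \<Longrightarrow> i < k+2 \<Longrightarrow> cd k (set_encode S) i \<in> BC k"
  unfolding BC_def by (rule image_eqI[of _ _ "(S,i)"]) auto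

definition mm :: "nat \<Rightarrow> nat" where
  "mm j = j + Suc (Max (insert 0 (\<Union>k\<in>{..<j}. BC k)))"

lemma mm_ge: "j \<le> mm j"
  by (simp add: mm_def)

lemma mm_BC:
  assumes "k < j" "y \<in> BC k"
  shows "y < mm j"
proof -
  have "finite (insert 0 (\<Union>k\<in>{..<j}. BC k))" using finite_BC by simp
  moreover have "y \<in> insert 0 (\<Union>k\<in>{..<j}. BC k)" using assms by blast
  ultimately have "y \<le> Max (insert 0 (\<Union>k\<in>{..<j}. BC k))" by (rule Max_ge)
  then show ?thesis by (simp add: mm_def)
qed

lemma cont_ff: "continuous_on UNIV ff"
proof (rule cont_cantor)
  fix k
  show "\<exists>D. finite D \<and> (\<forall>x x'. (\<forall>i\<in>D. x i = x' i) \<longrightarrow> ff x k = ff x' k)"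
  proof (intro exI[of _ "BC k"] conjI allI impI)
    show "finite (BC k)" by (rule finite_BC)
    fix x x' :: cantor
    assume ag: "\<forall>i\<in>BC k. x i = x' i"
    have eqS: "(\<forall>i<k+2. \<not> x (cd k (set_encode S) i)) = (\<forall>i<k+2. \<not> x' (cd k (set_encode S) i))"
      if "S \<in> Pow {..k}" for S
    proof -
      have "x (cd k (set_encode S) i) = x' (cd k (set_encode S) i)" if "i < k+2" for i
        using ag cd_BC[of S k i] \<open>S \<in> Pow {..k}\<close> that by simp
      then show ?thesis by simp
    qed
    show "ff x k = ff x' k" unfolding ff_def by (rule bex_cong[OF refl]) (rule eqS)
  qed
qed

lemma fiber_not_I0: "ff -` {z} \<notin> I0"
proof
  assume "ff -` {z} \<in> I0"
  then have "\<exists>C :: nat \<Rightarrow> cantor set. (\<forall>n. C n \<in> I0_gen) \<and> ff -` {z} \<subseteq> (\<Union>n. C n)"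
    by (simp add: I0_def)
  then obtain C :: "nat \<Rightarrow> cantor set" where C0: "(\<forall>n. C n \<in> I0_gen) \<and> ff -` {z} \<subseteq> (\<Union>n. C n)"
    by (elim exE)
  then have C1: "\<And>n. C n \<in> I0_gen" and C2: "ff -` {z} \<subseteq> (\<Union>n. C n)" by auto
  have exP: "\<exists>P. nonempty_perfect P \<and> (\<forall>x\<in>P. \<forall>y\<in>P. x \<noteq> y \<longrightarrow> ctrans (C n) x \<inter> ctrans (C n) y = {})" for n
    using C1[of n] by (simp add: I0_gen_def)
  define P where "P n = (SOME P. nonempty_perfect P \<and> (\<forall>x\<in>P. \<forall>y\<in>P. x \<noteq> y \<longrightarrow> ctrans (C n) x \<inter> ctrans (C n) y = {}))" for n
  have P: "nonempty_perfect (P n) \<and> (\<forall>x\<in>P n. \<forall>y\<in>P n. x \<noteq> y \<longrightarrow> ctrans (C n) x \<inter> ctrans (C n) y = {})" for n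
    unfolding P_def by (rule someI_ex[OF exP])
  have Cb: "C n \<in> sets borel" for n using C1[of n] by (simp add: I0_gen_def)
  define nj where "nj j = fst (prod_decode j)" for j
  have exPQ: "\<exists>pq. fst pq \<in> P (nj j) \<and> snd pq \<in> P (nj j) \<and> fst pq \<noteq> snd pq \<and> (\<forall>i<mm j. fst pq i = snd pq i)" for j
  proof -
    have "nonempty_perfect (P (nj j))" using P by blast
    then have "\<exists>p q. p \<in> P (nj j) \<and> q \<in> P (nj j) \<and> p \<noteq> q \<and> (\<forall>i<mm j. p i = q i)"
      by (rule perfect_pair)
    then obtain p q where "p \<in> P (nj j)" "q \<in> P (nj j)" "p \<noteq> q" "\<forall>i<mm j. p i = q i"
      by (elim exE conjE)
    then show ?thesis by (intro exI[of _ "(p,q)"]) simp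
  qed
  define pq where "pq j = (SOME pq. fst pq \<in> P (nj j) \<and> snd pq \<in> P (nj j) \<and> fst pq \<noteq> snd pq \<and> (\<forall>i<mm j. fst pq i = snd pq i))" for j
  have pqP: "fst (pq j) \<in> P (nj j) \<and> snd (pq j) \<in> P (nj j) \<and> fst (pq j) \<noteq> snd (pq j) \<and> (\<forall>i<mm j. fst (pq j) i = snd (pq j) i)" for j
    unfolding pq_def by (rule someI_ex[OF exPQ])
  define d where "d j = fst (pq j) \<oplus>\<^sub>c snd (pq j)" for j
  have d_small: "\<not> d j y" if "y < mm j" for j y
    using pqP[of j] that by (simp add: d_def cadd_def)
  have d_low: "\<not> d j y" if "y < j" for j y
    using d_small[of y j] mm_ge[of j] that by simp
  have finA: "finite {j. c j \<and> d j y}" for c y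
  proof (rule finite_subset[of _ "{..y}"])
    show "{j. c j \<and> d j y} \<subseteq> {..y}"
    proof
      fix j assume "j \<in> {j. c j \<and> d j y}"
      then have "\<not> y < j" using d_low by blast
      then show "j \<in> {..y}" by simp
    qed
  qed simp
  define pat where "pat S y = odd (card {j\<in>S. d j y})" for S y
  have exT: "\<exists>T. T \<subseteq> {..<k+2} \<and> T \<notin> (\<lambda>S. {i. i<k+2 \<and> pat S (cd k s i)}) ` Pow {..k}" for k s
  proof (rule ccontr)
    assume "\<not> ?thesis"
    then have "Pow {..<k+2} \<subseteq> (\<lambda>S. {i. i<k+2 \<and> pat S (cd k s i)}) ` Pow {..k}" by blast
    then have "card (Pow {..<k+2}) \<le> card ((\<lambda>S. {i. i<k+2 \<and> pat S (cd k s i)}) ` Pow {..k})"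
      by (intro card_mono) auto
    also have "\<dots> \<le> card (Pow {..k})" by (rule card_image_le) simp
    finally show False by (simp add: card_Pow)
  qed
  define T where "T k s = (SOME T. T \<subseteq> {..<k+2} \<and> T \<notin> (\<lambda>S. {i. i<k+2 \<and> pat S (cd k s i)}) ` Pow {..k})" for k s
  have Tp: "T k s \<subseteq> {..<k+2} \<and> T k s \<notin> (\<lambda>S. {i. i<k+2 \<and> pat S (cd k s i)}) ` Pow {..k}" for k s
    unfolding T_def by (rule someI_ex[OF exT])
  define uu where "uu k s i = (if z k then pat (set_decode s) (cd k s i) else i \<in> T k s)" for k s i
  define u where "u y = uu (fst (prod_decode y)) (fst (prod_decode (snd (prod_decode y)))) (snd (prod_decode (snd (prod_decode y))))" for y
  have u_cd: "u (cd k s i) = uu k s i" for k s i by (simp add: u_def cd_def)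
  define Phi where "Phi c y = (u y \<noteq> odd (card {j. c j \<and> d j y}))" for c y
  have Phi_block: "Phi c (cd k (set_encode S) i) = (uu k (set_encode S) i \<noteq> pat {j. j \<le> k \<and> c j} (cd k (set_encode S) i))"
    if "S \<subseteq> {..k}" "i < k+2" for c k S i
  proof -
    let ?y = "cd k (set_encode S) i"
    have yB: "?y \<in> BC k" using cd_BC that by blast
    have nd: "\<not> d j ?y" if "k < j" for j using mm_BC[OF that yB] d_small by blast
    have "{j. c j \<and> d j ?y} = {j \<in> {j. j \<le> k \<and> c j}. d j ?y}"
    proof (intro set_eqI iffI)
      fix j assume "j \<in> {j. c j \<and> d j ?y}"
      then have "\<not> k < j" using nd by blast
      then show "j \<in> {j \<in> {j. j \<le> k \<and> c j}. d j ?y}" using \<open>j \<in> {j. c j \<and> d j ?y}\<close> by simp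
    qed simp
    then show ?thesis by (simp add: Phi_def pat_def u_cd)
  qed
  have ffPhi: "ff (Phi c) = z" for c
  proof
    fix k
    let ?S = "{j. j \<le> k \<and> c j}"
    have fS: "finite ?S" by (rule finite_subset[of _ "{..k}"]) auto
    have SP: "?S \<in> Pow {..k}" by auto
    show "ff (Phi c) k = z k"
    proof (cases "z k")
      case True
      have "\<forall>i<k+2. \<not> Phi c (cd k (set_encode ?S) i)"
        using Phi_block[of ?S k] True fS by (auto simp: uu_def)
      then have "ff (Phi c) k" unfolding ff_def using SP by blast
      then show ?thesis using True by simp
    next
      case False
      have "\<not> ff (Phi c) k"
      proof
        assume "ff (Phi c) k"
        then obtain S where S: "S \<subseteq> {..k}" "\<forall>i<k+2. \<not> Phi c (cd k (set_encode S) i)"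
          unfolding ff_def by blast
        let ?s = "set_encode S"
        have eq: "(i \<in> T k ?s) = pat ?S (cd k ?s i)" if "i < k+2" for i
          using S(2) that Phi_block[OF S(1) that, of c] False by (simp add: uu_def)
        have "T k ?s = {i. i<k+2 \<and> pat ?S (cd k ?s i)}"
        proof
          show "T k ?s \<subseteq> {i. i<k+2 \<and> pat ?S (cd k ?s i)}"
            using Tp[of k ?s] eq by auto
          show "{i. i<k+2 \<and> pat ?S (cd k ?s i)} \<subseteq> T k ?s"
            using eq by auto
        qed
        then show False using Tp[of k ?s] SP by blast
      qed
      then show ?thesis using False by simp
    qed
  qed
  have Phi_dep: "Phi c y = Phi c' y" if "\<forall>j\<in>{..y}. c j = c' j" for c c' y
  proof -
    have "{j. c j \<and> d j y} = {j. c' j \<and> d j y}"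
    proof (intro set_eqI)
      fix j
      show "(j \<in> {j. c j \<and> d j y}) = (j \<in> {j. c' j \<and> d j y})"
      proof (cases "y < j")
        case True then show ?thesis using d_low by blast
      next
        case False then have "c j = c' j" using that by simp
        then show ?thesis by simp
      qed
    qed
    then show ?thesis by (simp add: Phi_def)
  qed
  have contPhi: "continuous_on UNIV Phi"
  proof (rule cont_cantor)
    fix y
    show "\<exists>D. finite D \<and> (\<forall>x x'. (\<forall>i\<in>D. x i = x' i) \<longrightarrow> Phi x y = Phi x' y)"
      using Phi_dep by (intro exI[of _ "{..y}"]) auto
  qed
  have Phi_flip: "Phi (flip j0 c) = Phi c \<oplus>\<^sub>c d j0" for c j0
  proof (rule ext)
    fix y
    let ?A = "{j. c j \<and> d j y}"
    let ?A' = "{j. flip j0 c j \<and> d j y}"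
    have fA: "finite ?A" by (rule finA)
    show "Phi (flip j0 c) y = (Phi c \<oplus>\<^sub>c d j0) y"
    proof (cases "d j0 y")
      case False
      then have "?A' = ?A" by (auto simp: flip_def)
      then show ?thesis using False by (simp add: Phi_def cadd_def)
    next
      case True
      show ?thesis
      proof (cases "c j0")
        case True2: True
        then have "?A' = ?A - {j0}" using True by (auto simp: flip_def)
        moreover have jA: "j0 \<in> ?A" using True True2 by simp
        ultimately have "card ?A' = card ?A - 1" using fA by simp
        moreover have "card ?A \<ge> 1" using fA jA
          by (metis One_nat_def Suc_leI card_gt_0_iff empty_iff)
        ultimately have "odd (card ?A') = (\<not> odd (card ?A))"
          by (cases "card ?A") auto
        then show ?thesis using True by (simp add: Phi_def cadd_def)
      next
        case False2: False
        then have "?A' = insert j0 ?A" using True by (auto simp: flip_def)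
        moreover have "j0 \<notin> ?A" using False2 by simp
        ultimately have "card ?A' = Suc (card ?A)" using fA by simp
        then show ?thesis using True by (simp add: Phi_def cadd_def)
      qed
    qed
  qed
  define A where "A n = Phi -` C n" for n
  have Ab: "A n \<in> sets borel" for n
  proof -
    have "Phi \<in> borel_measurable borel" using contPhi by (rule borel_measurable_continuous_onI)
    then have "Phi -` C n \<inter> space borel \<in> sets borel" using Cb by (rule measurable_sets)
    then show ?thesis by (simp add: A_def)
  qed
  have cover: "(\<Union>n. A n) = UNIV"
  proof -
    have "Phi c \<in> (\<Union>n. C n)" for c using C2 ffPhi[of c] by blast
    then show ?thesis by (auto simp: A_def)
  qed
  have "\<exists>n. \<not> meagr (A n)"
  proof (rule ccontr)
    assume "\<not> ?thesis"
    then have "meagr (\<Union>n. A n)" by (intro meagr_UN) blast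
    then show False using open_not_meagr[of UNIV] cover by simp
  qed
  then obtain n where nA: "\<not> meagr (A n)" by blast
  obtain U where U: "open U" "meagr ((A n - U) \<union> (U - A n))"
    using borel_BP[OF Ab[of n]] unfolding hasBP_def by blast
  have "U \<noteq> {}"
  proof
    assume "U = {}"
    then have "meagr (A n)" using U(2) by simp
    then show False using nA by simp
  qed
  then obtain x where "x \<in> U" by blast
  then obtain N where N: "cyl x N \<subseteq> U" using open_cyl_sub U(1) by blast
  define j0 where "j0 = prod_encode (n, N)"
  have j0N: "N \<le> j0" unfolding j0_def by (rule le_prod_encode_2)
  have nj0: "nj j0 = n" by (simp add: nj_def j0_def)
  define V where "V = cyl x N"
  define E where "E = V - A n"
  have "E \<subseteq> (A n - U) \<union> (U - A n)" using N unfolding E_def V_def by blast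
  with U(2) have mE: "meagr E" by (rule meagr_subset)
  have mE': "meagr (flip j0 -` E)" by (rule meagr_flip[OF mE])
  have "\<not> V \<subseteq> E \<union> flip j0 -` E"
  proof
    assume "V \<subseteq> E \<union> flip j0 -` E"
    with meagr_Un[OF mE mE'] have "meagr V" by (rule meagr_subset)
    moreover have "open V" unfolding V_def by (rule open_cyl)
    moreover have "V \<noteq> {}" unfolding V_def using cyl_self[of x N] by blast
    ultimately show False using open_not_meagr by blast
  qed
  then obtain c where c: "c \<in> V" "c \<notin> E" "flip j0 c \<notin> E" by blast
  have fc: "flip j0 c \<in> V" using flip_cyl[OF j0N] c(1) unfolding V_def by blast
  have "c \<in> A n" "flip j0 c \<in> A n" using c fc unfolding E_def by auto
  then have b1: "Phi c \<in> C n" and b2: "Phi c \<oplus>\<^sub>c d j0 \<in> C n"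
    unfolding A_def using Phi_flip by auto
  let ?p = "fst (pq j0)"
  let ?q = "snd (pq j0)"
  have pP: "?p \<in> P n" "?q \<in> P n" "?p \<noteq> ?q" using pqP[of j0] nj0 by auto
  have "Phi c \<oplus>\<^sub>c ?p \<in> ctrans (C n) ?p" using b1 unfolding ctrans_def by blast
  moreover have "Phi c \<oplus>\<^sub>c ?p \<in> ctrans (C n) ?q"
  proof -
    have "Phi c \<oplus>\<^sub>c ?p = (Phi c \<oplus>\<^sub>c d j0) \<oplus>\<^sub>c ?q" by (rule ext) (auto simp: cadd_def d_def)
    then show ?thesis using b2 unfolding ctrans_def by blast
  qed
  ultimately show False using P[of n] pP by blast
qed

theorem theorem2p1:
  shows "(\<exists>f :: cantor \<Rightarrow> cantor. continuous_on UNIV f \<and> (\<forall>x. f -` {x} \<notin> I0))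
         \<and> propM I0 \<and> \<not> propD I0"
proof -
  have c: "continuous_on UNIV ff" by (rule cont_ff)
  have f: "\<forall>x. ff -` {x} \<notin> I0" using fiber_not_I0 by blast
  have 1: "\<exists>f :: cantor \<Rightarrow> cantor. continuous_on UNIV f \<and> (\<forall>x. f -` {x} \<notin> I0)"
    using c f by blast
  have 2: "propM I0" unfolding propM_def using borel_measurable_continuous_onI[OF c] f by blast
  have 3: "\<not> propD I0"
  proof
    assume "propD I0"
    then obtain B where B: "B \<in> sets borel" "B \<notin> I0"
      "\<exists>P. nonempty_perfect P \<and> (\<forall>x\<in>P. \<forall>y\<in>P. x \<noteq> y \<longrightarrow> ctrans B x \<inter> ctrans B y = {})"
      unfolding propD_def by blast
    then have "B \<in> I0_gen" unfolding I0_gen_def by blast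
    then have "B \<in> I0" unfolding I0_def by (intro CollectI exI[of _ "\<lambda>n. B"]) auto
    then show False using B(2) by blast
  qed
  show ?thesis using 1 2 3 by blast
qed

end
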